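(* Let $V$ be a vertex operator algebra, $\rho:P\to V$ a covering of $V$ in $\mathrm{mod}(V)$, and $p\in P$ a homogeneous element with $\rho(p)=\mathbf{1}$. Then $$\mathrm{Ker}(\rho)=\mathrm{span}_{\mathbb{C}}\{v_np\mid v\in V,\ n\ge0\}.$$
   Context: $\mathrm{mod}(V)$: $\mathbb{N}$-graded $V$-modules with composition series of finite length. A surjective $V$-homomorphism $\rho:P\to V$ is a covering if $P$ is the only submodule of $P$ mapping onto $V$. For $v\in V$, $v_n$ denotes the coefficient of $z^{-n-1}$ in the vertex operator $Y^P(v,z)$ on $P$. *)

theory Defs
  imports Complex_Main
begin

(* The vertex operator
   Y(u,z) = sum_n u_n z^{-n-1} is encoded by its coefficients:
   Y u n w = u_n w. *)

record 'v voa =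
  vsc   :: "complex \<Rightarrow> 'v \<Rightarrow> 'v"
  vY    :: "'v \<Rightarrow> int \<Rightarrow> 'v \<Rightarrow> 'v"
  vac   :: 'v
  omega :: 'v
  cc    :: complex
  vgr   :: "int \<Rightarrow> 'v set"

record ('v, 'm) vmod =
  msc :: "complex \<Rightarrow> 'm \<Rightarrow> 'm"
  mY  :: "'v \<Rightarrow> int \<Rightarrow> 'm \<Rightarrow> 'm"
  mgr :: "nat \<Rightarrow> 'm set"

(* sum of a family with finitely many nonzero terms (the sums over i >= 0
   below have finite support by the truncation condition) *)
definition fsum :: "(nat \<Rightarrow> 'a::comm_monoid_add) \<Rightarrow> 'a" where
  "fsum f = sum f {i. f i \<noteq> 0}"

definition direct_sum_decomp :: "(complex \<Rightarrow> 'a::ab_group_add \<Rightarrow> 'a) \<Rightarrow> ('i \<Rightarrow> 'a set) \<Rightarrow> bool" where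
  "direct_sum_decomp sc G \<longleftrightarrow>
     (\<forall>i. module.subspace sc (G i)) \<and>
     (\<forall>x. \<exists>!f. (\<forall>i. f i \<in> G i) \<and> finite {i. f i \<noteq> 0} \<and> x = sum f {i. f i \<noteq> 0})"

(* Jacobi identity, written out coefficientwise (Borcherds identity): the
   coefficient of z0^{-l-1} z1^{-m-1} z2^{-n-1} of the Jacobi identity for
   Y_out(u,z1), Y_out(v,z2), Y_out(Y_in(u,z0)v,z2) applied to w. *)
definition jacobi_coeff ::
  "(complex \<Rightarrow> 'm::ab_group_add \<Rightarrow> 'm) \<Rightarrow> ('v \<Rightarrow> int \<Rightarrow> 'v \<Rightarrow> 'v) \<Rightarrow>
   ('v \<Rightarrow> int \<Rightarrow> 'm \<Rightarrow> 'm) \<Rightarrow> bool" where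
  "jacobi_coeff sc Yin Yout \<longleftrightarrow>
     (\<forall>u v w l m n.
        fsum (\<lambda>i. sc ((of_int m :: complex) gchoose i) (Yout (Yin u (l + int i) v) (m + n - int i) w))
      = fsum (\<lambda>i. sc ((-1) ^ i * ((of_int l :: complex) gchoose i))
                 (Yout u (l + m - int i) (Yout v (n + int i) w)
                  - sc ((-1) powi l) (Yout v (l + n - int i) (Yout u (m + int i) w)))))"

definition is_voa :: "'v::ab_group_add voa \<Rightarrow> bool" where
  "is_voa V \<longleftrightarrow>
     vector_space (vsc V) \<and>
     direct_sum_decomp (vsc V) (vgr V) \<and>
     (\<forall>k. \<exists>B. finite B \<and> vgr V k \<subseteq> module.span (vsc V) B) \<and>
     (\<exists>N. \<forall>k<N. vgr V k = {0}) \<and>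
     (\<forall>n w. Vector_Spaces.linear (vsc V) (vsc V) (\<lambda>u. vY V u n w)) \<and>
     (\<forall>n u. Vector_Spaces.linear (vsc V) (vsc V) (vY V u n)) \<and>
     (\<forall>u w. \<exists>N. \<forall>n\<ge>N. vY V u n w = 0) \<and>
     (\<forall>n w. vY V (vac V) n w = (if n = -1 then w else 0)) \<and>
     (\<forall>u n. n \<ge> 0 \<longrightarrow> vY V u n (vac V) = 0) \<and>
     (\<forall>u. vY V u (-1) (vac V) = u) \<and>
     jacobi_coeff (vsc V) (vY V) (vY V) \<and>
     (\<forall>m n w. vY V (omega V) (m + 1) (vY V (omega V) (n + 1) w)
              - vY V (omega V) (n + 1) (vY V (omega V) (m + 1) w)
            = vsc V (of_int (m - n)) (vY V (omega V) (m + n + 1) w)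
              + (if m + n = 0 then vsc V ((of_int m ^ 3 - of_int m) / 12 * cc V) w else 0)) \<and>
     (\<forall>k. \<forall>v\<in>vgr V k. vY V (omega V) 1 v = vsc V (of_int k) v) \<and>
     (\<forall>u n. vY V (vY V (omega V) 0 u) n = (\<lambda>w. vsc V (- of_int n) (vY V u (n - 1) w)))"

definition is_Nmod :: "'v::ab_group_add voa \<Rightarrow> ('v, 'm::ab_group_add) vmod \<Rightarrow> bool" where
  "is_Nmod V M \<longleftrightarrow>
     vector_space (msc M) \<and>
     direct_sum_decomp (msc M) (mgr M) \<and>
     (\<forall>n w. Vector_Spaces.linear (vsc V) (msc M) (\<lambda>u. mY M u n w)) \<and>
     (\<forall>n u. Vector_Spaces.linear (msc M) (msc M) (mY M u n)) \<and>
     (\<forall>u w. \<exists>N. \<forall>n\<ge>N. mY M u n w = 0) \<and>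
     (\<forall>n w. mY M (vac V) n w = (if n = -1 then w else 0)) \<and>
     jacobi_coeff (msc M) (vY V) (mY M) \<and>
     (\<forall>k u j m w. u \<in> vgr V k \<longrightarrow> w \<in> mgr M j \<longrightarrow>
        (if int j + k - m - 1 \<ge> 0 then mY M u m w \<in> mgr M (nat (int j + k - m - 1))
         else mY M u m w = 0))"

definition is_submod :: "('v, 'm::ab_group_add) vmod \<Rightarrow> 'm set \<Rightarrow> bool" where
  "is_submod M S \<longleftrightarrow>
     module.subspace (msc M) S \<and>
     (\<forall>u n w. w \<in> S \<longrightarrow> mY M u n w \<in> S) \<and>
     (\<forall>w\<in>S. \<exists>f. (\<forall>i. f i \<in> mgr M i \<inter> S) \<and> finite {i. f i \<noteq> 0} \<and> w = sum f {i. f i \<noteq> 0})"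

definition has_comp_series :: "('v, 'm::ab_group_add) vmod \<Rightarrow> bool" where
  "has_comp_series M \<longleftrightarrow>
     (\<exists>Ss. Ss \<noteq> [] \<and> hd Ss = {0} \<and> last Ss = UNIV \<and>
        (\<forall>S\<in>set Ss. is_submod M S) \<and>
        (\<forall>i. Suc i < length Ss \<longrightarrow> Ss ! i \<subset> Ss ! Suc i \<and>
            \<not> (\<exists>U. is_submod M U \<and> Ss ! i \<subset> U \<and> U \<subset> Ss ! Suc i)))"

definition in_modV :: "'v::ab_group_add voa \<Rightarrow> ('v, 'm::ab_group_add) vmod \<Rightarrow> bool" where
  "in_modV V M \<longleftrightarrow> is_Nmod V M \<and> has_comp_series M"

definition adjoint_mod :: "'v voa \<Rightarrow> ('v, 'v) vmod" where
  "adjoint_mod V = \<lparr>msc = vsc V, mY = vY V, mgr = (\<lambda>n. vgr V (int n))\<rparr>"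

definition is_vhom :: "('v, 'm::ab_group_add) vmod \<Rightarrow> ('v, 'n::ab_group_add) vmod \<Rightarrow> ('m \<Rightarrow> 'n) \<Rightarrow> bool" where
  "is_vhom M N f \<longleftrightarrow> Vector_Spaces.linear (msc M) (msc N) f \<and>
     (\<forall>u n w. f (mY M u n w) = mY N u n (f w))"

definition is_covering :: "('v, 'm::ab_group_add) vmod \<Rightarrow> ('v, 'n::ab_group_add) vmod \<Rightarrow> ('m \<Rightarrow> 'n) \<Rightarrow> bool" where
  "is_covering P N f \<longleftrightarrow> is_vhom P N f \<and> surj f \<and>
     (\<forall>S. is_submod P S \<longrightarrow> f ` S = UNIV \<longrightarrow> S = UNIV)"

end

theory Submission
  imports Defs
begin

lemma fsum_single: assumes "\<And>i. i > 0 \<Longrightarrow> f i = 0" shows "fsum f = f 0"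
proof (cases "f 0 = 0")
  case True
  have "{i. f i \<noteq> 0} = {}"
  proof (intro equalityI subsetI)
    fix i assume "i \<in> {i. f i \<noteq> 0}"
    then have "f i \<noteq> 0" by simp
    moreover have "f i = 0" using True assms[of i] by (cases i) auto
    ultimately show "i \<in> {}" by simp
  qed simp
  then show ?thesis using True unfolding fsum_def by simp
next
  case False
  have "{i. f i \<noteq> 0} = {0}"
  proof (intro equalityI subsetI)
    fix i assume "i \<in> {i. f i \<noteq> 0}"
    then have "f i \<noteq> 0" by simp
    then have "i = 0" using assms[of i] by (cases i) auto
    then show "i \<in> {0}" by simp
  qed (use False in simp)
  then show ?thesis unfolding fsum_def by simp
qed


lemma fsum_finite: assumes "\<And>i. i \<ge> K \<Longrightarrow> f i = 0" shows "fsum f = sum f {..<K}"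
proof -
  have "{i. f i \<noteq> 0} \<subseteq> {..<K}"
  proof
    fix i assume "i \<in> {i. f i \<noteq> 0}"
    then have "f i \<noteq> 0" by simp
    then have "\<not> i \<ge> K" using assms[of i] by blast
    then show "i \<in> {..<K}" by simp
  qed
  then show ?thesis unfolding fsum_def
    by (intro sum.mono_neutral_left) auto
qed

lemma (in module) fsum_in: assumes "subspace S" "\<And>i. f i \<in> S" shows "fsum f \<in> S"
  unfolding fsum_def by (rule subspace_sum[OF assms(1)]) (rule assms(2))


lemma jac_vac:
  fixes sc :: "complex \<Rightarrow> 'm::ab_group_add \<Rightarrow> 'm"
  assumes vs: "vector_space sc" and J: "jacobi_coeff sc Yin Yout"
    and z: "\<And>u n. Yout u n 0 = 0"
    and vv: "\<And>n w. Yout vv n w = (if n = -1 then w else 0)"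
    and l: "l < 0"
  shows "Yout (Yin u l vv) (-1) w = Yout u l w"
proof -
  interpret vector_space sc by (rule vs)
  have E: "fsum (\<lambda>i. sc ((of_int 0 :: complex) gchoose i) (Yout (Yin u (l + int i) vv) (0 + -1 - int i) w))
      = fsum (\<lambda>i. sc ((-1) ^ i * ((of_int l :: complex) gchoose i))
                 (Yout u (l + 0 - int i) (Yout vv (-1 + int i) w)
                  - sc ((-1) powi l) (Yout vv (l + -1 - int i) (Yout u (0 + int i) w))))"
    using J unfolding jacobi_coeff_def by blast
  have L: "fsum (\<lambda>i. sc ((of_int 0 :: complex) gchoose i) (Yout (Yin u (l + int i) vv) (0 + -1 - int i) w))
     = Yout (Yin u l vv) (-1) w"
  proof (subst fsum_single)
    fix i :: nat assume "i > 0"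
    then have "(of_int 0 :: complex) gchoose i = 0" by (simp add: gbinomial_0_left)
    then show "sc ((of_int 0 :: complex) gchoose i) (Yout (Yin u (l + int i) vv) (0 + -1 - int i) w) = 0"
      by simp
  qed simp
  have R0: "Yout vv (l + -1 - int i) x = 0" for i x using l by (simp add: vv)
  have R0': "Yout vv (l - 1 - int i) x = 0" for i x using l by (simp add: vv)
  have R: "fsum (\<lambda>i. sc ((-1) ^ i * ((of_int l :: complex) gchoose i))
                 (Yout u (l + 0 - int i) (Yout vv (-1 + int i) w)
                  - sc ((-1) powi l) (Yout vv (l + -1 - int i) (Yout u (0 + int i) w)))) = Yout u l w"
  proof (subst fsum_single)
    fix i :: nat assume "i > 0"
    then have "Yout vv (-1 + int i) w = 0" by (simp add: vv)
    then show "sc ((-1) ^ i * ((of_int l :: complex) gchoose i))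
                 (Yout u (l + 0 - int i) (Yout vv (-1 + int i) w)
                  - sc ((-1) powi l) (Yout vv (l + -1 - int i) (Yout u (0 + int i) w))) = 0"
      by (simp add: R0 R0' z)
  qed (use l in \<open>simp add: R0 R0' vv\<close>)
  show ?thesis using E L R by simp
qed



lemma jac_closure:
  fixes sc :: "complex \<Rightarrow> 'm::ab_group_add \<Rightarrow> 'm"
  assumes vs: "vector_space sc" and J: "jacobi_coeff sc Yin Yout"
    and z: "\<And>u n. Yout u n 0 = 0"
    and tr: "\<And>u w. \<exists>N. \<forall>n\<ge>N. Yout u n w = 0"
  shows "Yout u a (Yout v b w) \<in> module.span sc {Yout x n w | x n. True}"
proof -
  interpret vector_space sc by (rule vs)
  define S where "S = span {Yout x n w | x n. True}"
  obtain Nu where Nu: "\<And>n. n \<ge> Nu \<Longrightarrow> Yout u n w = 0" using tr by blast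
  obtain Nv where Nv: "\<And>n. n \<ge> Nv \<Longrightarrow> Yout v n w = 0" using tr by blast
  have "\<forall>b a. b \<ge> Nv - int k \<longrightarrow> Yout u a (Yout v b w) \<in> S" for k
  proof (induction k)
    case 0
    then show ?case using Nv z by (auto simp: S_def span_zero)
  next
    case (Suc k)
    show ?case
    proof (intro allI impI)
      fix b a assume b: "Nv - int (Suc k) \<le> b"
      show "Yout u a (Yout v b w) \<in> S"
      proof (cases "b \<ge> Nv")
        case True then show ?thesis using Nv z by (auto simp: S_def span_zero)
      next
        case False
        define l where "l = a - Nu"
        define g where "g = (\<lambda>i::nat. sc ((-1) ^ i * ((of_int l :: complex) gchoose i))
                 (Yout u (l + Nu - int i) (Yout v (b + int i) w)
                  - sc ((-1) powi l) (Yout v (l + b - int i) (Yout u (Nu + int i) w))))"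
        have E: "fsum (\<lambda>i. sc ((of_int Nu :: complex) gchoose i) (Yout (Yin u (l + int i) v) (Nu + b - int i) w))
          = fsum g"
          using J unfolding jacobi_coeff_def g_def by blast
        have LS: "fsum (\<lambda>i. sc ((of_int Nu :: complex) gchoose i) (Yout (Yin u (l + int i) v) (Nu + b - int i) w)) \<in> S"
          unfolding S_def by (rule fsum_in, simp, rule span_scale, rule span_base, blast)
        have g: "g i = sc ((-1) ^ i * ((of_int l :: complex) gchoose i)) (Yout u (a - int i) (Yout v (b + int i) w))" for i
          unfolding g_def using Nu z by (simp add: l_def)
        define K where "K = nat (Nv - b)"
        have K: "K > 0" using False by (simp add: K_def)
        have "fsum g = sum g {..<K}"
        proof (rule fsum_finite)
          fix i assume "K \<le> i"
          then have "b + int i \<ge> Nv" unfolding K_def by linarith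
          then show "g i = 0" unfolding g using Nv z by simp
        qed
        also have "\<dots> = g 0 + sum g {Suc 0..<K}"
          using K by (metis atLeast0LessThan sum.atLeast_Suc_lessThan)
        finally have F: "fsum g = Yout u a (Yout v b w) + sum g {Suc 0..<K}" by (simp add: g)
        have "sum g {Suc 0..<K} \<in> S"
        proof (rule subspace_sum)
          show "subspace S" by (simp add: S_def)
          fix i assume "i \<in> {Suc 0..<K}"
          then have "b + int i \<ge> Nv - int k" using b by auto
          then have "Yout u (a - int i) (Yout v (b + int i) w) \<in> S" using Suc.IH by blast
          then show "g i \<in> S" unfolding g S_def by (rule span_scale)
        qed
        moreover have "fsum g \<in> S" using LS E by simp
        ultimately have "fsum g - sum g {Suc 0..<K} \<in> S"
          unfolding S_def by (intro span_diff)
        then show ?thesis using F by simp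
      qed
    qed
  qed
  then have "b \<ge> Nv - int (nat (Nv - b)) \<longrightarrow> Yout u a (Yout v b w) \<in> S" by blast
  moreover have "b \<ge> Nv - int (nat (Nv - b))" by simp
  ultimately have "Yout u a (Yout v b w) \<in> S" by blast
  then show ?thesis unfolding S_def .
qed




definition decs :: "(complex \<Rightarrow> 'm::ab_group_add \<Rightarrow> 'm) \<Rightarrow> (nat \<Rightarrow> 'm set) \<Rightarrow> 'm set \<Rightarrow> 'm set" where
  "decs sc G S = {x. \<exists>f. (\<forall>i. f i \<in> G i \<inter> S) \<and> finite {i. f i \<noteq> 0} \<and> x = sum f {i. f i \<noteq> 0}}"

lemma dec_subspace:
  fixes sc :: "complex \<Rightarrow> 'm::ab_group_add \<Rightarrow> 'm"
  assumes vs: "vector_space sc" and G: "\<And>i. module.subspace sc (G i)" and S: "module.subspace sc S"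
  shows "module.subspace sc (decs sc G S)"
proof -
  interpret vector_space sc by (rule vs)
  show ?thesis
  proof (rule subspaceI)
    show "0 \<in> decs sc G S" unfolding decs_def
      by (rule CollectI, rule exI[of _ "\<lambda>_. 0"]) (use G S in \<open>simp add: subspace_0\<close>)
  next
    fix x y assume "x \<in> decs sc G S" "y \<in> decs sc G S"
    then obtain f g where f: "\<forall>i. f i \<in> G i \<inter> S" "finite {i. f i \<noteq> 0}" "x = sum f {i. f i \<noteq> 0}"
      and g: "\<forall>i. g i \<in> G i \<inter> S" "finite {i. g i \<noteq> 0}" "y = sum g {i. g i \<noteq> 0}"
      unfolding decs_def by blast
    define h where "h = (\<lambda>i. f i + g i)"
    define A where "A = {i. f i \<noteq> 0}"
    define B where "B = {i. g i \<noteq> 0}"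
    have C: "{i. h i \<noteq> 0} \<subseteq> A \<union> B" unfolding h_def A_def B_def by auto
    have fin: "finite (A \<union> B)" using f g by (simp add: A_def B_def)
    have "sum h {i. h i \<noteq> 0} = sum h (A \<union> B)"
      by (rule sum.mono_neutral_left[OF fin C]) auto
    also have "\<dots> = sum f (A \<union> B) + sum g (A \<union> B)" unfolding h_def by (rule sum.distrib)
    also have "sum f (A \<union> B) = sum f A"
      by (rule sum.mono_neutral_right[OF fin]) (auto simp: A_def)
    also have "sum g (A \<union> B) = sum g B"
      by (rule sum.mono_neutral_right[OF fin]) (auto simp: B_def)
    finally have "x + y = sum h {i. h i \<noteq> 0}" using f g by (simp add: A_def B_def)
    moreover have "\<forall>i. h i \<in> G i \<inter> S" unfolding h_def using f g G S by (simp add: subspace_add)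
    moreover have "finite {i. h i \<noteq> 0}" using C fin by (rule finite_subset)
    ultimately show "x + y \<in> decs sc G S" unfolding decs_def by blast
  next
    fix c x assume "x \<in> decs sc G S"
    then obtain f where f: "\<forall>i. f i \<in> G i \<inter> S" "finite {i. f i \<noteq> 0}" "x = sum f {i. f i \<noteq> 0}"
      unfolding decs_def by blast
    define h where "h = (\<lambda>i. sc c (f i))"
    define A where "A = {i. f i \<noteq> 0}"
    have C: "{i. h i \<noteq> 0} \<subseteq> A" unfolding h_def A_def by auto
    have fin: "finite A" using f by (simp add: A_def)
    have "sum h {i. h i \<noteq> 0} = sum h A"
      by (rule sum.mono_neutral_left[OF fin C]) auto
    also have "\<dots> = sc c (sum f A)" unfolding h_def by (simp add: scale_sum_right)
    finally have "sc c x = sum h {i. h i \<noteq> 0}" using f by (simp add: A_def)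
    moreover have "\<forall>i. h i \<in> G i \<inter> S" unfolding h_def using f G S by (simp add: subspace_scale)
    moreover have "finite {i. h i \<noteq> 0}" using C fin by (rule finite_subset)
    ultimately show "sc c x \<in> decs sc G S" unfolding decs_def by blast
  qed
qed

lemma dec_hom:
  fixes sc :: "complex \<Rightarrow> 'm::ab_group_add \<Rightarrow> 'm"
  assumes vs: "vector_space sc" and G: "\<And>i. module.subspace sc (G i)" and S: "module.subspace sc S"
    and x: "x \<in> G d" "x \<in> S"
  shows "x \<in> decs sc G S"
proof -
  interpret vector_space sc by (rule vs)
  define f where "f = (\<lambda>i. if i = d then x else 0)"
  have "\<forall>i. f i \<in> G i \<inter> S" unfolding f_def using x G S by (simp add: subspace_0)
  moreover have E: "{i. f i \<noteq> 0} = (if x = 0 then {} else {d})" unfolding f_def by auto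
  moreover have "finite {i. f i \<noteq> 0}" unfolding E by simp
  moreover have "x = sum f {i. f i \<noteq> 0}" unfolding E by (simp add: f_def)
  ultimately show ?thesis unfolding decs_def by blast
qed




lemma lin_facts:
  assumes "Vector_Spaces.linear s1 s2 f"
  shows "f 0 = 0" "f (x + y) = f x + f y" "f (s1 c x) = s2 c (f x)" "f (x - y) = f x - f y"
    "f (sum g A) = (\<Sum>a\<in>A. f (g a))"
proof -
  interpret L: Vector_Spaces.linear s1 s2 f by (rule assms)
  show "f 0 = 0" by (rule L.zero)
  show "f (x + y) = f x + f y" by (rule L.add)
  show "f (s1 c x) = s2 c (f x)" by (rule L.scale)
  show "f (x - y) = f x - f y" by (rule L.diff)
  show "f (sum g A) = (\<Sum>a\<in>A. f (g a))" by (rule L.sum)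
qed

lemma lin_preimage:
  assumes "Vector_Spaces.linear s1 s2 f" "module.subspace s2 T"
  shows "module.subspace s1 {x. f x \<in> T}"
proof -
  interpret L: Vector_Spaces.linear s1 s2 f by (rule assms)
  show ?thesis using L.subspace_linear_preimage[OF assms(2)] .
qed

theorem lemma12:
  fixes V :: "'v::ab_group_add voa"
    and P :: "('v, 'p::ab_group_add) vmod"
    and \<rho> :: "'p \<Rightarrow> 'v"
    and p :: 'p
  assumes "is_voa V"
    and "in_modV V (adjoint_mod V)"
    and "in_modV V P"
    and "is_covering P (adjoint_mod V) \<rho>"
    and "\<exists>k. p \<in> mgr P k"
    and "\<rho> p = vac V"
  shows "{x. \<rho> x = 0} = module.span (msc P) {mY P v (int n) p | v n. True}"
proof -
  have vsV: "vector_space (vsc V)" using assms(1) unfolding is_voa_def by blast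
  have dsV: "direct_sum_decomp (vsc V) (vgr V)" using assms(1) unfolding is_voa_def by blast
  have vacpos: "\<And>u n. n \<ge> 0 \<Longrightarrow> vY V u n (vac V) = 0" using assms(1) unfolding is_voa_def by blast
  have vacm1: "\<And>u. vY V u (-1) (vac V) = u" using assms(1) unfolding is_voa_def by blast
  have NP: "is_Nmod V P" using assms(3) unfolding in_modV_def by blast
  have vsP: "vector_space (msc P)" using NP unfolding is_Nmod_def by blast
  have dsP: "direct_sum_decomp (msc P) (mgr P)" using NP unfolding is_Nmod_def by blast
  have lin_u: "\<And>n w. Vector_Spaces.linear (vsc V) (msc P) (\<lambda>u. mY P u n w)"
    using NP unfolding is_Nmod_def by blast
  have lin_w: "\<And>n u. Vector_Spaces.linear (msc P) (msc P) (mY P u n)"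
    using NP unfolding is_Nmod_def by blast
  have trP: "\<And>u w. \<exists>N. \<forall>n\<ge>N. mY P u n w = 0" using NP unfolding is_Nmod_def by blast
  have vacP: "\<And>n w. mY P (vac V) n w = (if n = -1 then w else 0)" using NP unfolding is_Nmod_def by blast
  have JP: "jacobi_coeff (msc P) (vY V) (mY P)" using NP unfolding is_Nmod_def by blast
  have grP: "\<And>k u j m w. u \<in> vgr V k \<Longrightarrow> w \<in> mgr P j \<Longrightarrow>
        (if int j + k - m - 1 \<ge> 0 then mY P u m w \<in> mgr P (nat (int j + k - m - 1))
         else mY P u m w = 0)" using NP unfolding is_Nmod_def by blast
  have hom: "is_vhom P (adjoint_mod V) \<rho>" and cov: "\<And>S. is_submod P S \<Longrightarrow> \<rho> ` S = UNIV \<Longrightarrow> S = UNIV"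
    using assms(4) unfolding is_covering_def by blast+
  have lin_rho: "Vector_Spaces.linear (msc P) (vsc V) \<rho>"
    using hom unfolding is_vhom_def adjoint_mod_def by simp
  have rho_Y: "\<And>u n w. \<rho> (mY P u n w) = vY V u n (\<rho> w)"
    using hom unfolding is_vhom_def adjoint_mod_def by simp
  obtain k0 where k0: "p \<in> mgr P k0" using assms(5) by blast
  interpret P: vector_space "msc P" by (rule vsP)
  interpret VV: vector_space "vsc V" by (rule vsV)
  have zP: "\<And>u n. mY P u n 0 = 0" using lin_facts(1)[OF lin_w] .
  have subG: "\<And>i. P.subspace (mgr P i)" using dsP unfolding direct_sum_decomp_def by blast
  define Gen where "Gen = {mY P v n p | v n. True}"
  define S where "S = P.span Gen"
  have subS: "P.subspace S" unfolding S_def by simp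
  have genS: "\<And>v n. mY P v n p \<in> S" unfolding S_def Gen_def by (rule P.span_base) blast
  have clo: "mY P u n w \<in> S" if w: "w \<in> S" for u n w
  proof -
    have "w \<in> {w. mY P u n w \<in> S}"
      using w[unfolded S_def]
    proof (rule P.span_subspace_induct)
      show "P.subspace {w. mY P u n w \<in> S}" by (rule lin_preimage[OF lin_w subS])
      fix x assume "x \<in> Gen"
      then obtain v m where x: "x = mY P v m p" unfolding Gen_def by blast
      have "mY P u n (mY P v m p) \<in> module.span (msc P) {mY P x n p | x n. True}"
        by (rule jac_closure[OF vsP JP zP trP])
      then show "x \<in> {w. mY P u n w \<in> S}" unfolding x S_def Gen_def by simp
    qed
    then show ?thesis by simp
  qed
  have grS: "S \<subseteq> decs (msc P) (mgr P) S"
  proof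
    fix w assume w: "w \<in> S"
    show "w \<in> decs (msc P) (mgr P) S"
      using w[unfolded S_def]
    proof (rule P.span_subspace_induct)
      show "P.subspace (decs (msc P) (mgr P) S)" by (rule dec_subspace[OF vsP subG subS])
      fix x assume "x \<in> Gen"
      then obtain v m where x: "x = mY P v m p" unfolding Gen_def by blast
      obtain f where f: "\<forall>j. f j \<in> vgr V j" "finite {j. f j \<noteq> 0}" "v = sum f {j. f j \<noteq> 0}"
        using dsV unfolding direct_sum_decomp_def by blast
      have "x = (\<Sum>j\<in>{j. f j \<noteq> 0}. mY P (f j) m p)"
        unfolding x f(3) by (rule lin_facts(5)[OF lin_u])
      also have "\<dots> \<in> decs (msc P) (mgr P) S"
      proof (rule P.subspace_sum[OF dec_subspace[OF vsP subG subS]])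
        fix j assume "j \<in> {j. f j \<noteq> 0}"
        have g: "if int k0 + j - m - 1 \<ge> 0 then mY P (f j) m p \<in> mgr P (nat (int k0 + j - m - 1))
           else mY P (f j) m p = 0" by (rule grP[OF spec[OF f(1)] k0])
        have "\<exists>d. mY P (f j) m p \<in> mgr P d"
        proof (cases "int k0 + j - m - 1 \<ge> 0")
          case True then show ?thesis using g by auto
        next
          case False then have "mY P (f j) m p = 0" using g by simp
          then show ?thesis using P.subspace_0[OF subG[of 0]] by auto
        qed
        then obtain d where "mY P (f j) m p \<in> mgr P d" by blast
        then show "mY P (f j) m p \<in> decs (msc P) (mgr P) S"
          by (rule dec_hom[OF vsP subG subS _ genS])
      qed
      finally show "x \<in> decs (msc P) (mgr P) S" .
    qed
  qed
  have submod: "is_submod P S"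
    unfolding is_submod_def
  proof (intro conjI allI impI ballI)
    show "P.subspace S" by (rule subS)
    fix u n w assume "w \<in> S" then show "mY P u n w \<in> S" by (rule clo)
  next
    fix w assume "w \<in> S"
    then have "w \<in> decs (msc P) (mgr P) S" using grS by blast
    then show "\<exists>f. (\<forall>i. f i \<in> mgr P i \<inter> S) \<and> finite {i. f i \<noteq> 0} \<and> w = sum f {i. f i \<noteq> 0}"
      unfolding decs_def by blast
  qed
  have img: "\<rho> ` S = UNIV"
  proof (intro equalityI subsetI)
    fix y :: 'v
    have "y = \<rho> (mY P y (-1) p)" by (simp add: rho_Y assms(6) vacm1)
    then show "y \<in> \<rho> ` S" using genS by blast
  qed simp
  have SU: "S = UNIV" by (rule cov[OF submod img])
  define W where "W = P.span {mY P v (int n) p | v n. True}"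
  have subW: "P.subspace W" unfolding W_def by simp
  have Wgen: "\<And>v n. mY P v (int n) p \<in> W" unfolding W_def by (rule P.span_base) blast
  have claim: "x - mY P (\<rho> x) (-1) p \<in> W" for x
  proof -
    have "x \<in> S" using SU by simp
    then have "x \<in> {x. x - mY P (\<rho> x) (-1) p \<in> W}" unfolding S_def
    proof (rule P.span_subspace_induct)
      fix x assume "x \<in> Gen"
      then obtain v m where x: "x = mY P v m p" unfolding Gen_def by blast
      show "x \<in> {x. x - mY P (\<rho> x) (-1) p \<in> W}"
      proof (cases "m \<ge> 0")
        case True
        then have "\<rho> x = 0" by (simp add: x rho_Y assms(6) vacpos)
        moreover have "mY P 0 (-1) p = 0" by (rule lin_facts(1)[OF lin_u])
        moreover have "x \<in> W" using Wgen[of v "nat m"] True by (simp add: x)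
        ultimately show ?thesis by simp
      next
        case False
        have "mY P (vY V v m (vac V)) (-1) p = mY P v m p"
          by (rule jac_vac[OF vsP JP zP vacP]) (use False in simp)
        then show ?thesis by (simp add: x rho_Y assms(6) P.subspace_0[OF subW])
      qed
    next
      show "P.subspace {x. x - mY P (\<rho> x) (- 1) p \<in> W}"
      proof (rule P.subspaceI)
        show "0 \<in> {x. x - mY P (\<rho> x) (- 1) p \<in> W}"
          by (simp add: lin_facts(1)[OF lin_rho] lin_facts(1)[OF lin_u] P.subspace_0[OF subW])
      next
        fix x y assume "x \<in> {x. x - mY P (\<rho> x) (- 1) p \<in> W}" "y \<in> {x. x - mY P (\<rho> x) (- 1) p \<in> W}"
        then have "(x - mY P (\<rho> x) (- 1) p) + (y - mY P (\<rho> y) (- 1) p) \<in> W"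
          using P.subspace_add[OF subW] by simp
        moreover have "(x + y) - mY P (\<rho> (x + y)) (- 1) p = (x - mY P (\<rho> x) (- 1) p) + (y - mY P (\<rho> y) (- 1) p)"
          by (simp add: lin_facts(2)[OF lin_rho] lin_facts(2)[OF lin_u])
        ultimately have "(x + y) - mY P (\<rho> (x + y)) (- 1) p \<in> W" by metis
        then show "x + y \<in> {x. x - mY P (\<rho> x) (- 1) p \<in> W}" by simp
      next
        fix c x assume "x \<in> {x. x - mY P (\<rho> x) (- 1) p \<in> W}"
        then have "msc P c (x - mY P (\<rho> x) (- 1) p) \<in> W"
          using P.subspace_scale[OF subW] by simp
        moreover have "msc P c x - mY P (\<rho> (msc P c x)) (- 1) p = msc P c (x - mY P (\<rho> x) (- 1) p)"
          by (simp add: lin_facts(3)[OF lin_rho] lin_facts(3)[OF lin_u] P.scale_right_diff_distrib)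
        ultimately have "msc P c x - mY P (\<rho> (msc P c x)) (- 1) p \<in> W" by metis
        then show "msc P c x \<in> {x. x - mY P (\<rho> x) (- 1) p \<in> W}" by simp
      qed
    qed
    then show ?thesis by simp
  qed
  have "{x. \<rho> x = 0} = W"
  proof (intro equalityI subsetI)
    fix x assume "x \<in> {x. \<rho> x = 0}"
    then have "\<rho> x = 0" by simp
    then show "x \<in> W" using claim[of x] lin_facts(1)[OF lin_u] by simp
  next
    fix x assume "x \<in> W"
    then show "x \<in> {x. \<rho> x = 0}" unfolding W_def
    proof (rule P.span_subspace_induct)
      show "P.subspace {x. \<rho> x = 0}"
        using lin_preimage[OF lin_rho VV.subspace_single_0] by simp
    next
      fix x assume "x \<in> {mY P v (int n) p |v n. True}"
      then show "x \<in> {x. \<rho> x = 0}" by (auto simp: rho_Y assms(6) vacpos)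
    qed
  qed
  then show ?thesis unfolding W_def .
qed


end
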